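(* Let $V$ be a simple Lie triple system over a field of characteristic $0$ such that every element of $U(V)$ that commutes with all elements of $V$ is of the form $c1+x$ with $c\in F$ and $x\in V$. Then every nonzero proper two-sided ideal of $U(V)$ equals the augmentation ideal $\ker\epsilon$.
   Context: A Lie triple system (L.t.s.) is a vector space $V$ with trilinear product $[\cdot,\cdot,\cdot]$ satisfying $[a,a,b]=0$, $[a,b,c]+[b,c,a]+[c,a,b]=0$, $[x,y,[a,b,c]]=[[x,y,a],b,c]+[a,[x,y,b],c]+[a,b,[x,y,c]]$. An ideal is a subspace $I$ with $[I,V,V]\subseteq I$; $V$ is simple if $[V,V,V]\ne0$ and its only ideals are $0$ and $V$. The universal enveloping algebra $U(V)$ (in the sense of Pérez-Izquierdo, $V$ viewed as a Bol algebra with zero binary bracket) is a unital non-associative bialgebra generated as a unital algebra by $V\subseteq U(V)$, $V$ being its primitive elements, satisfying $\sum a_{(1)}(y(a_{(2)}z))=\sum (a_{(1)}(ya_{(2)}))z$, with $ab=ba$ and $a(bc)-b(ac)=[a,b,c]$ for $a,b,c\in V$; it has the PBW filtration $U(V)_n$ (span of products of at most $n$ elements of $V$), with $[a,U(V)_n]\subseteq U(V)_{n-1}$ for $a\in V$. $\epsilon$ is the counit and $\ker\epsilon$ is the ideal generated by $V$. *)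

theory Defs
  imports Main "HOL.Vector_Spaces"
begin

text \<open>
  The universal enveloping algebra U(V) is the whole type 'u, a 'k-vector space with scalar
  multiplication sc, a bilinear (non-associative) multiplication mul with unit one.
\<close>

definition lin_form :: "('k::field \<Rightarrow> 'u::ab_group_add \<Rightarrow> 'u) \<Rightarrow> ('u \<Rightarrow> 'k) \<Rightarrow> bool" where
  "lin_form sc f \<longleftrightarrow> (\<forall>x y. f (x + y) = f x + f y) \<and> (\<forall>c x. f (sc c x) = c * f x)"

definition lin_map :: "('k::field \<Rightarrow> 'u::ab_group_add \<Rightarrow> 'u) \<Rightarrow> ('u \<Rightarrow> 'u) \<Rightarrow> bool" where
  "lin_map sc f \<longleftrightarrow> (\<forall>x y. f (x + y) = f x + f y) \<and> (\<forall>c x. f (sc c x) = sc c (f x))"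

definition bilin_form :: "('k::field \<Rightarrow> 'u::ab_group_add \<Rightarrow> 'u) \<Rightarrow> ('u \<Rightarrow> 'u \<Rightarrow> 'k) \<Rightarrow> bool" where
  "bilin_form sc b \<longleftrightarrow> (\<forall>x. lin_form sc (b x)) \<and> (\<forall>y. lin_form sc (\<lambda>x. b x y))"

definition trilin_form :: "('k::field \<Rightarrow> 'u::ab_group_add \<Rightarrow> 'u) \<Rightarrow> ('u \<Rightarrow> 'u \<Rightarrow> 'u \<Rightarrow> 'k) \<Rightarrow> bool" where
  "trilin_form sc g \<longleftrightarrow> (\<forall>x y. lin_form sc (g x y)) \<and> (\<forall>x z. lin_form sc (\<lambda>y. g x y z))
      \<and> (\<forall>y z. lin_form sc (\<lambda>x. g x y z))"

definition bilin_map :: "('k::field \<Rightarrow> 'u::ab_group_add \<Rightarrow> 'u) \<Rightarrow> ('u \<Rightarrow> 'u \<Rightarrow> 'u) \<Rightarrow> bool" where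
  "bilin_map sc m \<longleftrightarrow> (\<forall>x. lin_map sc (m x)) \<and> (\<forall>y. lin_map sc (\<lambda>x. m x y))"

text \<open>
  Elements of U \<otimes> U are represented by finite lists of pairs (p,q), standing for the sum of
  the tensors p \<otimes> q.  Two representatives denote the same tensor iff every bilinear form takes
  the same value on them (linear functionals on U \<otimes> U separate points).
\<close>

definition tens_eq :: "('k::field \<Rightarrow> 'u::ab_group_add \<Rightarrow> 'u) \<Rightarrow> ('u \<times> 'u) list \<Rightarrow> ('u \<times> 'u) list \<Rightarrow> bool" where
  "tens_eq sc xs ys \<longleftrightarrow> (\<forall>b. bilin_form sc b \<longrightarrow>
      (\<Sum>(p,q)\<leftarrow>xs. b p q) = (\<Sum>(p,q)\<leftarrow>ys. b p q))"

definition nonassoc_bialgebra ::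
  "('k::field \<Rightarrow> 'u::ab_group_add \<Rightarrow> 'u) \<Rightarrow> ('u \<Rightarrow> 'u \<Rightarrow> 'u) \<Rightarrow> 'u
    \<Rightarrow> ('u \<Rightarrow> ('u \<times> 'u) list) \<Rightarrow> ('u \<Rightarrow> 'k) \<Rightarrow> bool" where
  "nonassoc_bialgebra sc mul one cop eps \<longleftrightarrow>
     vector_space sc \<and> bilin_map sc mul \<and>
     (\<forall>x. mul one x = x \<and> mul x one = x) \<and>
     \<comment> \<open>comultiplication is linear\<close>
     (\<forall>x y. tens_eq sc (cop (x + y)) (cop x @ cop y)) \<and>
     (\<forall>c x. tens_eq sc (cop (sc c x)) (map (\<lambda>(p,q). (sc c p, q)) (cop x))) \<and>
     \<comment> \<open>coassociativity\<close>
     (\<forall>x g. trilin_form sc g \<longrightarrow>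
        (\<Sum>(p,q)\<leftarrow>cop x. \<Sum>(p1,p2)\<leftarrow>cop p. g p1 p2 q)
      = (\<Sum>(p,q)\<leftarrow>cop x. \<Sum>(q1,q2)\<leftarrow>cop q. g p q1 q2)) \<and>
     \<comment> \<open>counit\<close>
     lin_form sc eps \<and>
     (\<forall>x. (\<Sum>(p,q)\<leftarrow>cop x. sc (eps p) q) = x \<and> (\<Sum>(p,q)\<leftarrow>cop x. sc (eps q) p) = x) \<and>
     \<comment> \<open>comultiplication and counit are unital algebra homomorphisms\<close>
     (\<forall>x y. tens_eq sc (cop (mul x y))
        (concat (map (\<lambda>(p,q). map (\<lambda>(p',q'). (mul p p', mul q q')) (cop y)) (cop x)))) \<and>
     tens_eq sc (cop one) [(one, one)] \<and>
     (\<forall>x y. eps (mul x y) = eps x * eps y) \<and> eps one = 1"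

definition primitives ::
  "('k::field \<Rightarrow> 'u::ab_group_add \<Rightarrow> 'u) \<Rightarrow> 'u \<Rightarrow> ('u \<Rightarrow> ('u \<times> 'u) list) \<Rightarrow> 'u set" where
  "primitives sc one cop = {x. tens_eq sc (cop x) [(x, one), (one, x)]}"

inductive pbw_mono :: "('u \<Rightarrow> 'u \<Rightarrow> 'u) \<Rightarrow> 'u \<Rightarrow> 'u set \<Rightarrow> nat \<Rightarrow> 'u \<Rightarrow> bool"
  for mul :: "'u \<Rightarrow> 'u \<Rightarrow> 'u" and one :: 'u and V :: "'u set" where
  mono_one: "pbw_mono mul one V n one"
| mono_gen: "x \<in> V \<Longrightarrow> 1 \<le> n \<Longrightarrow> pbw_mono mul one V n x"
| mono_mul: "pbw_mono mul one V i x \<Longrightarrow> pbw_mono mul one V j y \<Longrightarrow> i + j \<le> n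
              \<Longrightarrow> pbw_mono mul one V n (mul x y)"

definition pbw_filt ::
  "('k::field \<Rightarrow> 'u::ab_group_add \<Rightarrow> 'u) \<Rightarrow> ('u \<Rightarrow> 'u \<Rightarrow> 'u) \<Rightarrow> 'u \<Rightarrow> 'u set \<Rightarrow> nat \<Rightarrow> 'u set" where
  "pbw_filt sc mul one V n = module.span sc {x. pbw_mono mul one V n x}"

definition lie_triple_system :: "('k::field \<Rightarrow> 'u::ab_group_add \<Rightarrow> 'u) \<Rightarrow> 'u set
    \<Rightarrow> ('u \<Rightarrow> 'u \<Rightarrow> 'u \<Rightarrow> 'u) \<Rightarrow> bool" where
  "lie_triple_system sc V tp \<longleftrightarrow>
     module.subspace sc V \<and>
     (\<forall>a\<in>V. \<forall>b\<in>V. \<forall>c\<in>V. tp a b c \<in> V) \<and>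
     (\<forall>b\<in>V. \<forall>c\<in>V. \<forall>x\<in>V. \<forall>y\<in>V. \<forall>k.
        tp (x + sc k y) b c = tp x b c + sc k (tp y b c) \<and>
        tp b (x + sc k y) c = tp b x c + sc k (tp b y c) \<and>
        tp b c (x + sc k y) = tp b c x + sc k (tp b c y)) \<and>
     (\<forall>a\<in>V. \<forall>b\<in>V. tp a a b = 0) \<and>
     (\<forall>a\<in>V. \<forall>b\<in>V. \<forall>c\<in>V. tp a b c + tp b c a + tp c a b = 0) \<and>
     (\<forall>x\<in>V. \<forall>y\<in>V. \<forall>a\<in>V. \<forall>b\<in>V. \<forall>c\<in>V.
        tp x y (tp a b c) = tp (tp x y a) b c + tp a (tp x y b) c + tp a b (tp x y c))"

definition lts_ideal :: "('k::field \<Rightarrow> 'u::ab_group_add \<Rightarrow> 'u) \<Rightarrow> 'u set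
    \<Rightarrow> ('u \<Rightarrow> 'u \<Rightarrow> 'u \<Rightarrow> 'u) \<Rightarrow> 'u set \<Rightarrow> bool" where
  "lts_ideal sc V tp I \<longleftrightarrow> module.subspace sc I \<and> I \<subseteq> V \<and>
     (\<forall>i\<in>I. \<forall>a\<in>V. \<forall>b\<in>V. tp i a b \<in> I)"

definition simple_lts :: "('k::field \<Rightarrow> 'u::ab_group_add \<Rightarrow> 'u) \<Rightarrow> 'u set
    \<Rightarrow> ('u \<Rightarrow> 'u \<Rightarrow> 'u \<Rightarrow> 'u) \<Rightarrow> bool" where
  "simple_lts sc V tp \<longleftrightarrow> lie_triple_system sc V tp \<and>
     (\<exists>a\<in>V. \<exists>b\<in>V. \<exists>c\<in>V. tp a b c \<noteq> 0) \<and>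
     (\<forall>I. lts_ideal sc V tp I \<longrightarrow> I = {0} \<or> I = V)"

text \<open>
  (U, mul, one, cop, eps) is the universal enveloping algebra U(V) of the L.t.s. (V, tp)
  (in the sense of Perez-Izquierdo, V viewed as a Bol algebra with zero binary product),
  characterised by the properties listed in the paper.
\<close>

definition is_env_algebra ::
  "('k::field \<Rightarrow> 'u::ab_group_add \<Rightarrow> 'u) \<Rightarrow> ('u \<Rightarrow> 'u \<Rightarrow> 'u) \<Rightarrow> 'u
    \<Rightarrow> ('u \<Rightarrow> ('u \<times> 'u) list) \<Rightarrow> ('u \<Rightarrow> 'k) \<Rightarrow> 'u set \<Rightarrow> ('u \<Rightarrow> 'u \<Rightarrow> 'u \<Rightarrow> 'u) \<Rightarrow> bool" where
  "is_env_algebra sc mul one cop eps V tp \<longleftrightarrow>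
     nonassoc_bialgebra sc mul one cop eps \<and>
     \<comment> \<open>V is exactly the set of primitive elements\<close>
     primitives sc one cop = V \<and>
     \<comment> \<open>generated by V as a unital algebra\<close>
     (\<forall>S. module.subspace sc S \<and> one \<in> S \<and> V \<subseteq> S \<and> (\<forall>x\<in>S. \<forall>y\<in>S. mul x y \<in> S)
          \<longrightarrow> S = UNIV) \<and>
     \<comment> \<open>left Bol identity in Hopf form\<close>
     (\<forall>a y z. (\<Sum>(p,q)\<leftarrow>cop a. mul p (mul y (mul q z)))
            = (\<Sum>(p,q)\<leftarrow>cop a. mul (mul p (mul y q)) z)) \<and>
     (\<forall>a\<in>V. \<forall>b\<in>V. mul a b = mul b a) \<and>
     (\<forall>a\<in>V. \<forall>b\<in>V. \<forall>c\<in>V. mul a (mul b c) - mul b (mul a c) = tp a b c) \<and>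
     \<comment> \<open>PBW filtration property\<close>
     (\<forall>a\<in>V. \<forall>n u. u \<in> pbw_filt sc mul one V (Suc n)
          \<longrightarrow> mul a u - mul u a \<in> pbw_filt sc mul one V n)"

definition two_sided_ideal :: "('k::field \<Rightarrow> 'u::ab_group_add \<Rightarrow> 'u) \<Rightarrow> ('u \<Rightarrow> 'u \<Rightarrow> 'u) \<Rightarrow> 'u set \<Rightarrow> bool" where
  "two_sided_ideal sc mul I \<longleftrightarrow> module.subspace sc I \<and>
     (\<forall>x\<in>I. \<forall>u. mul u x \<in> I \<and> mul x u \<in> I)"

end

theory Submission
  imports Defs
begin

lemma pbw_mono_mono:
  assumes "pbw_mono mul one V i x" "i \<le> n" shows "pbw_mono mul one V n x"
  using assms(1)
proof (cases rule: pbw_mono.cases)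
  case mono_one then show ?thesis by (simp add: pbw_mono.mono_one)
next
  case mono_gen then show ?thesis using assms(2) by (auto intro: pbw_mono.mono_gen)
next
  case (mono_mul i1 x1 j y) then show ?thesis using assms(2) by (auto intro: pbw_mono.mono_mul)
qed

lemma pbw_mono_zero:
  "pbw_mono mul one V n x \<Longrightarrow> n = 0 \<Longrightarrow> (\<forall>z. mul z one = z) \<Longrightarrow> x = one"
  by (induction rule: pbw_mono.induct) auto

theorem lemma5p1:
  fixes sc :: "'k::field_char_0 \<Rightarrow> 'u::ab_group_add \<Rightarrow> 'u"
    and mul :: "'u \<Rightarrow> 'u \<Rightarrow> 'u" and one :: 'u
    and cop :: "'u \<Rightarrow> ('u \<times> 'u) list" and eps :: "'u \<Rightarrow> 'k"
    and V :: "'u set" and tp :: "'u \<Rightarrow> 'u \<Rightarrow> 'u \<Rightarrow> 'u"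
  assumes simple: "simple_lts sc V tp"
    and env: "is_env_algebra sc mul one cop eps V tp"
    and centr: "\<forall>u. (\<forall>x\<in>V. mul u x = mul x u) \<longrightarrow> (\<exists>c. \<exists>x\<in>V. u = sc c one + x)"
    and I: "two_sided_ideal sc mul I" "I \<noteq> {0}" "I \<noteq> UNIV"
  shows "I = {u. eps u = 0}"
proof -
  have bialg: "nonassoc_bialgebra sc mul one cop eps"
    using env by (simp add: is_env_algebra_def)
  have vs: "vector_space sc" using bialg by (simp add: nonassoc_bialgebra_def)
  interpret module sc using vs by (simp add: module_iff_vector_space)
  have bil: "bilin_map sc mul" using bialg by (simp add: nonassoc_bialgebra_def)
  have mr_add: "mul x (y + z) = mul x y + mul x z" for x y z
    using bil by (simp add: bilin_map_def lin_map_def)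
  have ml_add: "mul (x + y) z = mul x z + mul y z" for x y z
    using bil by (simp add: bilin_map_def lin_map_def)
  have mr_sc: "mul x (sc c y) = sc c (mul x y)" for x y c
    using bil by (simp add: bilin_map_def lin_map_def)
  have ml_sc: "mul (sc c x) y = sc c (mul x y)" for x y c
    using bil by (simp add: bilin_map_def lin_map_def)
  interpret mr: additive "mul x" for x by standard (rule mr_add)
  interpret ml: additive "\<lambda>y. mul y z" for z by standard (rule ml_add)
  have unit: "mul one x = x" "mul x one = x" for x
    using bialg by (simp_all add: nonassoc_bialgebra_def)
  have epslin: "lin_form sc eps" using bialg by (simp add: nonassoc_bialgebra_def)
  have eps_add: "eps (x + y) = eps x + eps y" for x y using epslin by (simp add: lin_form_def)
  have eps_sc: "eps (sc c x) = c * eps x" for c x using epslin by (simp add: lin_form_def)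
  interpret ea: additive eps by standard (rule eps_add)
  have eps_mul: "eps (mul x y) = eps x * eps y" for x y
    using bialg by (simp add: nonassoc_bialgebra_def)
  have eps_one: "eps one = 1" using bialg by (simp add: nonassoc_bialgebra_def)
  have lts: "lie_triple_system sc V tp" using simple by (simp add: simple_lts_def)
  have Vsub: "subspace V" using lts by (simp add: lie_triple_system_def)
  have tpV: "tp a b c \<in> V" if "a \<in> V" "b \<in> V" "c \<in> V" for a b c
    using lts that by (simp add: lie_triple_system_def)
  have tplin: "tp (x + sc k y) b c = tp x b c + sc k (tp y b c)"
    if "x \<in> V" "y \<in> V" "b \<in> V" "c \<in> V" for x y k b c
    using lts that unfolding lie_triple_system_def by blast
  have nontriv: "\<exists>a\<in>V. \<exists>b\<in>V. \<exists>c\<in>V. tp a b c \<noteq> 0" using simple by (simp add: simple_lts_def)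
  have simp_id: "I' = {0} \<or> I' = V" if "lts_ideal sc V tp I'" for I'
    using simple that by (simp add: simple_lts_def)
  have gen: "S = UNIV" if "subspace S" "one \<in> S" "V \<subseteq> S" "\<forall>x\<in>S. \<forall>y\<in>S. mul x y \<in> S" for S
    using env that unfolding is_env_algebra_def by blast
  have comm: "mul a b = mul b a" if "a \<in> V" "b \<in> V" for a b
    using env that unfolding is_env_algebra_def by blast
  have tpdef: "mul a (mul b c) - mul b (mul a c) = tp a b c" if "a \<in> V" "b \<in> V" "c \<in> V" for a b c
    using env that unfolding is_env_algebra_def by blast
  have pbw: "mul a u - mul u a \<in> pbw_filt sc mul one V n"
    if "a \<in> V" "u \<in> pbw_filt sc mul one V (Suc n)" for a u n
    using env that unfolding is_env_algebra_def by blast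
  have Isub: "subspace I" using I(1) by (simp add: two_sided_ideal_def)
  have Il: "mul u x \<in> I" and Ir: "mul x u \<in> I" if "x \<in> I" for x u
    using I(1) that by (simp_all add: two_sided_ideal_def)
  have one_notin: "one \<notin> I"
  proof
    assume "one \<in> I"
    then have "x \<in> I" for x using Ir[of one x] unit by simp
    then show False using I(3) by auto
  qed
  define F where "F n = pbw_filt sc mul one V n" for n
  have F_def': "F n = span {x. pbw_mono mul one V n x}" for n
    by (simp add: F_def pbw_filt_def)
  have Fmono: "F i \<subseteq> F n" if "i \<le> n" for i n
    unfolding F_def' by (rule span_mono) (auto intro: pbw_mono_mono that)
  have Fmul: "mul x y \<in> F (n + m)" if x: "x \<in> F n" and y: "y \<in> F m" for x y n m
  proof -
    have base: "mul x y \<in> F (n + m)" if "pbw_mono mul one V n x" for x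
    proof -
      have "y \<in> {y. mul x y \<in> F (n + m)}"
      proof (rule span_subspace_induct[OF y[unfolded F_def']])
        show "subspace {y. mul x y \<in> F (n + m)}" unfolding F_def'
          by (rule subspaceI) (auto simp: mr.zero mr.add mr_sc span_zero span_add span_scale)
      next
        fix y assume "y \<in> {x. pbw_mono mul one V m x}"
        then show "y \<in> {y. mul x y \<in> F (n + m)}"
          using that unfolding F_def' by (auto intro!: span_base pbw_mono.mono_mul)
      qed
      then show ?thesis by simp
    qed
    have "x \<in> {x. mul x y \<in> F (n + m)}"
    proof (rule span_subspace_induct[OF x[unfolded F_def']])
      show "subspace {x. mul x y \<in> F (n + m)}" unfolding F_def'
        by (rule subspaceI) (auto simp: ml.zero ml.add ml_sc span_zero span_add span_scale)
    next
      fix x assume "x \<in> {x. pbw_mono mul one V n x}"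
      then show "x \<in> {x. mul x y \<in> F (n + m)}" using base by auto
    qed
    then show ?thesis by simp
  qed
  have Fall: "\<exists>n. u \<in> F n" for u
  proof -
    let ?S = "{u. \<exists>n. u \<in> F n}"
    have "subspace ?S"
    proof (rule subspaceI)
      show "0 \<in> ?S" unfolding F_def' using span_zero by blast
    next
      fix x y assume "x \<in> ?S" "y \<in> ?S"
      then obtain n m where "x \<in> F n" "y \<in> F m" by blast
      then have "x \<in> F (n + m)" "y \<in> F (n + m)" using Fmono[of n "n+m"] Fmono[of m "n+m"] by auto
      then show "x + y \<in> ?S" unfolding F_def' using span_add by blast
    next
      fix c x assume "x \<in> ?S"
      then show "sc c x \<in> ?S" unfolding F_def' using span_scale by blast
    qed
    moreover have "one \<in> ?S" unfolding F_def' by (auto intro!: exI[of _ 0] span_base pbw_mono.mono_one)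
    moreover have "V \<subseteq> ?S" unfolding F_def' by (auto intro!: exI[of _ 1] span_base pbw_mono.mono_gen)
    moreover have "\<forall>x\<in>?S. \<forall>y\<in>?S. mul x y \<in> ?S" using Fmul by blast
    ultimately have "?S = UNIV" by (rule gen)
    then show ?thesis by blast
  qed
  have F0: "\<exists>c. u = sc c one" if "u \<in> F 0" for u
  proof -
    have "{x. pbw_mono mul one V 0 x} \<subseteq> {one}"
      using pbw_mono_zero[of mul one V 0] unit by auto
    then have "u \<in> span {one}" using that unfolding F_def' by (meson span_mono subsetD)
    then show ?thesis by (auto simp: span_singleton)
  qed
  have pbwF: "mul a u - mul u a \<in> F n" if "a \<in> V" "u \<in> F (Suc n)" for a u n
    using pbw that unfolding F_def by blast
  obtain u0 where u0: "u0 \<in> I" "u0 \<noteq> 0" using I(2) subspace_0[OF Isub] by blast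
  define P where "P n \<longleftrightarrow> (\<exists>u\<in>I. u \<noteq> 0 \<and> u \<in> F n)" for n
  have "\<exists>n. P n" using Fall[of u0] u0 unfolding P_def by blast
  then obtain n where Pn: "P n" and Pmin: "\<And>m. m < n \<Longrightarrow> \<not> P m"
    by (metis exists_least_iff)
  obtain u where u: "u \<in> I" "u \<noteq> 0" "u \<in> F n" using Pn unfolding P_def by blast
  have ucomm: "mul u a = mul a u" if "a \<in> V" for a
  proof (cases n)
    case 0
    then obtain c where "u = sc c one" using F0 u by blast
    then show ?thesis by (simp add: ml_sc mr_sc unit)
  next
    case (Suc m)
    have "mul a u - mul u a \<in> F m" using pbwF that u Suc by blast
    moreover have "mul a u - mul u a \<in> I" using Il Ir u(1) subspace_diff[OF Isub] by blast
    ultimately have "mul a u - mul u a = 0" using Pmin[of m] Suc unfolding P_def by blast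
    then show ?thesis by simp
  qed
  obtain c x where x: "x \<in> V" and ucx: "u = sc c one + x"
    using centr ucomm by metis
  have scI: "one \<in> I" if "sc c one \<in> I" "c \<noteq> 0" for c
  proof -
    have "sc (inverse c) (sc c one) \<in> I" using that subspace_scale[OF Isub] by blast
    then show ?thesis using that by simp
  qed
  have tpxI: "tp x a b \<in> I" if "a \<in> V" "b \<in> V" for a b
  proof -
    have "mul u (mul a b) - mul a (mul u b) = tp x a b"
      using tpdef[OF x that] by (simp add: ucx ml.add ml_sc mr.add mr_sc unit)
    moreover have "mul u (mul a b) - mul a (mul u b) \<in> I"
      using Ir Il u(1) subspace_diff[OF Isub] by blast
    ultimately show ?thesis by simp
  qed
  have tp0: "tp 0 b c = 0" if "b \<in> V" "c \<in> V" for b c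
    using tplin[of 0 0 b c 1] that subspace_0[OF Vsub] by simp
  have tpadd: "tp (y + z) b c = tp y b c + tp z b c" if "y \<in> V" "z \<in> V" "b \<in> V" "c \<in> V" for y z b c
    using tplin[of y z b c 1] that by simp
  have tpsc: "tp (sc k z) b c = sc k (tp z b c)" if "z \<in> V" "b \<in> V" "c \<in> V" for z k b c
    using tplin[of 0 z b c k] that subspace_0[OF Vsub] tp0 by simp
  have IVideal: "lts_ideal sc V tp (I \<inter> V)"
    unfolding lts_ideal_def
  proof (intro conjI ballI)
    show "subspace (I \<inter> V)" using Isub Vsub by (auto simp: subspace_def)
    show "I \<inter> V \<subseteq> V" by blast
  next
    fix i a b assume "i \<in> I \<inter> V" "a \<in> V" "b \<in> V"
    then have "mul i (mul a b) - mul a (mul i b) \<in> I"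
      using Ir Il subspace_diff[OF Isub] by blast
    then show "tp i a b \<in> I \<inter> V" using tpdef tpV \<open>i \<in> I \<inter> V\<close> \<open>a \<in> V\<close> \<open>b \<in> V\<close> by auto
  qed
  have VI: "V \<subseteq> I"
  proof (cases "I \<inter> V = {0}")
    case True
    define Z where "Z = {z\<in>V. \<forall>a\<in>V. \<forall>b\<in>V. tp z a b = 0}"
    have "lts_ideal sc V tp Z"
      unfolding lts_ideal_def
    proof (intro conjI ballI)
      show "subspace Z" unfolding Z_def
        by (rule subspaceI) (auto simp: subspace_0[OF Vsub] subspace_add[OF Vsub]
              subspace_scale[OF Vsub] tp0 tpadd tpsc)
      show "Z \<subseteq> V" unfolding Z_def by blast
    next
      fix i a b assume "i \<in> Z" "a \<in> V" "b \<in> V"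
      then show "tp i a b \<in> Z" unfolding Z_def by (auto simp: subspace_0[OF Vsub] tp0)
    qed
    then have "Z = {0} \<or> Z = V" by (rule simp_id)
    moreover have "Z \<noteq> V" using nontriv unfolding Z_def by blast
    moreover have "x \<in> Z" unfolding Z_def using x tpxI tpV True by blast
    ultimately have "x = 0" by blast
    then have "sc c one \<in> I" "c \<noteq> 0" using u ucx by auto
    then show ?thesis using scI one_notin by blast
  next
    case False
    then have "I \<inter> V = V" using simp_id[OF IVideal] by blast
    then show ?thesis by blast
  qed
  have epsV: "eps v = 0" if "v \<in> V" for v
  proof -
    define K where "K = {v\<in>V. eps v = 0}"
    have epstp: "eps (tp a b c) = 0" if "a \<in> V" "b \<in> V" "c \<in> V" for a b c
      using tpdef[OF that, symmetric] by (simp add: ea.diff eps_mul)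
    have "lts_ideal sc V tp K"
      unfolding lts_ideal_def
    proof (intro conjI ballI)
      show "subspace K" unfolding K_def
        by (rule subspaceI) (auto simp: subspace_0[OF Vsub] subspace_add[OF Vsub]
              subspace_scale[OF Vsub] ea.zero eps_add eps_sc)
      show "K \<subseteq> V" unfolding K_def by blast
    next
      fix i a b assume "i \<in> K" "a \<in> V" "b \<in> V"
      then show "tp i a b \<in> K" unfolding K_def using tpV epstp by auto
    qed
    then have "K = {0} \<or> K = V" by (rule simp_id)
    moreover have "K \<noteq> {0}"
    proof
      assume "K = {0}"
      then have "tp a b c = 0" if "a \<in> V" "b \<in> V" "c \<in> V" for a b c
        using tpV[OF that] epstp[OF that] unfolding K_def by blast
      then show False using nontriv by blast
    qed
    ultimately show ?thesis using that unfolding K_def by blast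
  qed
  define J where "J = {j\<in>I. eps j = 0}"
  have Jsub: "subspace J" unfolding J_def
    by (rule subspaceI) (auto simp: subspace_0[OF Isub] subspace_add[OF Isub]
          subspace_scale[OF Isub] ea.zero eps_add eps_sc)
  define S where "S = {w. \<exists>j\<in>J. \<exists>c. w = j + sc c one}"
  have "subspace S"
  proof (rule subspaceI)
    show "0 \<in> S" unfolding S_def using subspace_0[OF Jsub] by (auto intro!: bexI[of _ 0] exI[of _ 0])
  next
    fix y z assume "y \<in> S" "z \<in> S"
    then obtain j1 c1 j2 c2 where "j1 \<in> J" "j2 \<in> J" "y = j1 + sc c1 one" "z = j2 + sc c2 one"
      unfolding S_def by blast
    then show "y + z \<in> S" unfolding S_def
      by (auto intro!: bexI[of _ "j1 + j2"] exI[of _ "c1 + c2"] subspace_add[OF Jsub]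
          simp: scale_left_distrib)
  next
    fix k y assume "y \<in> S"
    then obtain j1 c1 where "j1 \<in> J" "y = j1 + sc c1 one"
      unfolding S_def by blast
    then show "sc k y \<in> S" unfolding S_def
      by (auto intro!: bexI[of _ "sc k j1"] exI[of _ "k * c1"] subspace_scale[OF Jsub]
          simp: scale_right_distrib)
  qed
  moreover have "one \<in> S" unfolding S_def using subspace_0[OF Jsub]
    by (auto intro!: bexI[of _ 0] exI[of _ 1])
  moreover have "V \<subseteq> S"
  proof
    fix v assume "v \<in> V"
    then have "v \<in> J" using VI epsV unfolding J_def by blast
    then show "v \<in> S" unfolding S_def by (auto intro!: bexI[of _ v] exI[of _ 0])
  qed
  moreover have "\<forall>y\<in>S. \<forall>z\<in>S. mul y z \<in> S"
  proof (intro ballI)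
    fix y z assume "y \<in> S" "z \<in> S"
    then obtain j1 c1 j2 c2 where j: "j1 \<in> J" "j2 \<in> J" and yz: "y = j1 + sc c1 one" "z = j2 + sc c2 one"
      unfolding S_def by blast
    have JI: "mul a j \<in> J" "mul j a \<in> J" if "j \<in> J" for a j
      using that Il Ir eps_mul unfolding J_def by auto
    have eq: "mul y z = (mul j1 j2 + sc c2 j1 + sc c1 j2) + sc (c1 * c2) one"
      by (simp add: yz ml.add mr.add ml_sc mr_sc unit scale_right_distrib mult.commute add.assoc add.left_commute)
    have "mul j1 j2 + sc c2 j1 + sc c1 j2 \<in> J"
      using j JI subspace_add[OF Jsub] subspace_scale[OF Jsub] by metis
    then show "mul y z \<in> S" unfolding S_def eq by blast
  qed
  ultimately have SU: "S = UNIV" by (rule gen)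
  have decomp: "\<exists>j\<in>J. \<exists>c. w = j + sc c one" for w
    using SU unfolding S_def by blast
  show ?thesis
  proof (intro set_eqI iffI)
    fix w assume "w \<in> I"
    obtain j c where j: "j \<in> J" and w: "w = j + sc c one" using decomp by blast
    have "sc c one = w - j" using w by simp
    also have "\<dots> \<in> I" using \<open>w \<in> I\<close> j subspace_diff[OF Isub] unfolding J_def by blast
    finally have "c = 0" using scI one_notin by blast
    then show "w \<in> {u. eps u = 0}" using w j unfolding J_def by simp
  next
    fix w assume "w \<in> {u. eps u = 0}"
    obtain j c where j: "j \<in> J" and w: "w = j + sc c one" using decomp by blast
    have "eps w = c" using w j by (simp add: eps_add eps_sc eps_one J_def)
    then have "c = 0" using \<open>w \<in> {u. eps u = 0}\<close> by simp
    then show "w \<in> I" using w j unfolding J_def by simp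
  qed
qed

end
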